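(* For all $z\in\mathbb{C}\setminus[1,\infty)$, $$z^2\gamma(z)=(1-z)\,\mathrm{Li}_0'(z)-z\log(1-z).$$ If $|z|<1$, this relation can be written $$z\gamma(z)=-\log(1-z)-(1-z)\sum_{n=1}^{\infty} z^{n-1}\log n.$$
   Context: $\gamma(z)$ is the generalized-Euler-constant function: for $|z|\le1$, $\gamma(z)=\sum_{n=1}^{\infty} z^{n-1}\left(\frac{1}{n}-\log\frac{n+1}{n}\right)$, and for $z\in\mathbb{C}\setminus[1,\infty)$ it denotes the analytic continuation given by $\gamma(z)=\int_0^1\frac{1-x+\log x}{(1-xz)\log x}\,dx$. The extended polylogarithm $\mathrm{Li}_s(z)$ is the analytic continuation of the series $\sum_{n=1}^{\infty} z^n/n^s$ (which converges for every $s\in\mathbb{C}$ when $|z|<1$), and $\mathrm{Li}_0'(z)$ denotes $\frac{\partial}{\partial s}\mathrm{Li}_s(z)$ at $s=0$; for $|z|<1$, $\mathrm{Li}_0'(z)=-\sum_{n=1}^\infty z^n\log n$. $\log$ is the principal branch. *)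

theory Defs
  imports "HOL-Complex_Analysis.Complex_Analysis"
begin

definition slit_plane :: "complex set" where
  "slit_plane = - (complex_of_real ` {1..})"

text \<open>Generalized Euler constant function: the power series on the closed unit disc,
  the integral representation (its analytic continuation) elsewhere.\<close>
definition gen_euler_gamma :: "complex \<Rightarrow> complex" where
  "gen_euler_gamma z =
     (if norm z \<le> 1 then
        (\<Sum>n. z ^ n * (1 / of_nat (Suc n) - Ln (of_nat (Suc (Suc n)) / of_nat (Suc n))))
      else
        integral {0..1} (\<lambda>x::real. complex_of_real (1 - x + ln x) /
                                    ((1 - complex_of_real x * z) * complex_of_real (ln x))))"

text \<open>Extended polylogarithm Li_s(z): for each s, the analytic continuation (in z) to the
  slit plane of the series sum_{n>=1} z^n / n^s from the unit disc (unique, since the slit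
  plane is open and connected); set to 0 off the slit plane to make it well-defined.\<close>
definition polylog :: "complex \<Rightarrow> complex \<Rightarrow> complex" where
  "polylog s = (THE f. f holomorphic_on slit_plane \<and>
      (\<forall>z. norm z < 1 \<longrightarrow> f z = (\<Sum>n. z ^ Suc n / (of_nat (Suc n) powr s))) \<and>
      (\<forall>z. z \<notin> slit_plane \<longrightarrow> f z = 0))"

definition polylog0' :: "complex \<Rightarrow> complex" where
  "polylog0' z = deriv (\<lambda>s. polylog s z) 0"

end

theory Submission
  imports Defs "HOL-Real_Asymp.Real_Asymp"
begin


lemma slit_plane_iff: "z \<in> slit_plane \<longleftrightarrow> \<not> (Im z = 0 \<and> Re z \<ge> 1)"
proof
  assume "z \<in> slit_plane"
  then show "\<not> (Im z = 0 \<and> Re z \<ge> 1)"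
    unfolding slit_plane_def
    by (metis ComplI Compl_iff atLeast_iff complex_is_Real_iff image_eqI of_real_Re)
next
  assume "\<not> (Im z = 0 \<and> Re z \<ge> 1)"
  then show "z \<in> slit_plane"
    unfolding slit_plane_def by auto
qed

lemma open_slit: "open slit_plane"
proof -
  have "slit_plane = - {z. Im z = 0 \<and> Re z \<ge> 1}"
    by (auto simp: slit_plane_iff)
  moreover have "closed {z. Im z = 0 \<and> Re z \<ge> 1}"
    by (intro closed_Collect_conj closed_Collect_eq closed_Collect_le continuous_intros)
  ultimately show ?thesis by (metis open_Compl)
qed

lemma connected_slit: "connected slit_plane"
proof (rule starlike_imp_connected)
  show "starlike slit_plane"
    unfolding starlike_def
  proof (intro bexI ballI subsetI)
    show "0 \<in> slit_plane" by (simp add: slit_plane_iff)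
    fix x y assume x: "x \<in> slit_plane" and y: "y \<in> closed_segment 0 x"
    then obtain u where u: "0 \<le> u" "u \<le> 1" "y = u *\<^sub>R x"
      by (auto simp: closed_segment_def)
    show "y \<in> slit_plane"
    proof (rule ccontr)
      assume "y \<notin> slit_plane"
      then have h: "Im y = 0" "Re y \<ge> 1" by (auto simp: slit_plane_iff)
      then have "u > 0" using u by (cases "u = 0") auto
      have "Im x = 0" using h u \<open>u > 0\<close> by simp
      moreover have "Re x \<ge> 1"
      proof -
        have "u * Re x \<ge> 1" using h u by simp
        moreover have "u * Re x \<le> Re x" if "Re x \<ge> 0" using u that
          by (simp add: mult_left_le_one_le)
        ultimately show ?thesis using u
          by (smt (verit) mult_nonneg_nonpos)
      qed
      ultimately show False using x by (simp add: slit_plane_iff)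
    qed
  qed
qed

lemma slit_nonzero: 
  assumes "z \<in> slit_plane" "x \<in> {0..1::real}"
  shows "1 - of_real x * z \<noteq> 0"
proof
  assume h: "1 - of_real x * z = 0"
  then have "x \<noteq> 0" by auto
  from h have "z = of_real (1/x)" using \<open>x\<noteq>0\<close> 
    by (simp add: field_simps)
  then have "Im z = 0" "Re z = 1/x" by auto
  moreover have "1/x \<ge> 1" using assms(2) \<open>x\<noteq>0\<close> by (auto simp: field_simps)
  ultimately show False using assms by (auto simp: slit_plane_iff)
qed

lemma slit_lb:
  assumes "z \<in> slit_plane"
  shows "\<exists>c>0. \<forall>x\<in>{0..1::real}. c \<le> norm (1 - of_real x * z)"
proof -
  have "continuous_on {0..1::real} (\<lambda>x. norm (1 - of_real x * z))"
    by (intro continuous_intros)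
  from continuous_attains_inf[OF compact_Icc _ this]
  obtain x0 where x0: "x0 \<in> {0..1}" "\<forall>y\<in>{0..1}. norm (1 - of_real x0 * z) \<le> norm (1 - of_real y * z)"
    by auto
  show ?thesis using x0 slit_nonzero[OF assms x0(1)]
    by (intro exI[of _ "norm (1 - of_real x0 * z)"]) auto
qed

lemma slit_lb_ball:
  assumes "z0 \<in> slit_plane"
  shows "\<exists>c>0. \<exists>r>0. ball z0 r \<subseteq> slit_plane \<and>
           (\<forall>z\<in>ball z0 r. \<forall>x\<in>{0..1::real}. c \<le> norm (1 - of_real x * z))"
proof -
  obtain c where c: "c>0" "\<forall>x\<in>{0..1::real}. c \<le> norm (1 - of_real x * z0)"
    using slit_lb assms by blast
  obtain r0 where r0: "r0>0" "ball z0 r0 \<subseteq> slit_plane"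
    using open_slit assms open_contains_ball by blast
  define r where "r = min r0 (c/2)"
  have "\<forall>z\<in>ball z0 r. \<forall>x\<in>{0..1::real}. c/2 \<le> norm (1 - of_real x * z)"
  proof (intro ballI)
    fix z x assume z: "z \<in> ball z0 r" and x: "x \<in> {0..1::real}"
    have "norm (of_real x * (z - z0)) \<le> norm (z - z0)" using x 
      by (auto simp: norm_mult intro: mult_left_le_one_le)
    also have "\<dots> < c/2" using z by (simp add: r_def dist_norm norm_minus_commute)
    finally have "norm (of_real x * (z - z0)) < c/2" .
    moreover have "1 - of_real x * z = (1 - of_real x * z0) - of_real x * (z - z0)"
      by (simp add: algebra_simps)
    moreover have "c \<le> norm (1 - of_real x * z0)" using c(2) x by auto
    moreover have "norm (1 - of_real x * z0) - norm (of_real x * (z - z0)) \<le> norm (1 - of_real x * z)"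
      using norm_triangle_ineq2[of "1 - of_real x * z0" "of_real x * (z - z0)"] 
      by (simp add: algebra_simps)
    ultimately show "c/2 \<le> norm (1 - of_real x * z)" by linarith
  qed
  moreover have "ball z0 r \<subseteq> slit_plane" using r0 by (auto simp: r_def)
  moreover have "r > 0" using r0 c by (simp add: r_def)
  moreover have "c/2 > 0" using c by simp
  ultimately show ?thesis by blast
qed

lemma slit_lb_exp:
  fixes z :: complex
  assumes "\<forall>x\<in>{0..1::real}. c \<le> norm (1 - of_real x * z)" "t \<ge> 0"
  shows "c \<le> norm (1 - z * of_real (exp (-t)))"
proof -
  have "exp (-t) \<in> {0..1}" using assms(2) by auto
  then have "c \<le> norm (1 - of_real (exp (-t)) * z)" using assms(1) by blast
  then show ?thesis by (simp add: mult.commute)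
qed


definition Dm :: "real \<Rightarrow> real" where
  "Dm t = (t powr (-1/2) + 2 + t powr (1/2)) * exp (-t)"

definition wt :: "complex \<Rightarrow> real \<Rightarrow> complex" where
  "wt s t = of_real t powr (s - 1) * of_real (exp (-t) * (1 - exp (-t)))"

lemma spike0:
  fixes f :: "real \<Rightarrow> 'a::banach"
  shows "(f has_integral y) {0..} \<longleftrightarrow> (f has_integral y) {0<..}"
  by (rule has_integral_spike_set_eq; rule negligible_subset[of "{0}"]) auto

lemma spike0_int:
  fixes f :: "real \<Rightarrow> 'a::banach"
  shows "f integrable_on {0..} \<longleftrightarrow> f integrable_on {0<..}"
  using spike0 unfolding integrable_on_def by blast

lemma spike0_integral:
  fixes f :: "real \<Rightarrow> 'a::banach"
  shows "integral {0..} f = integral {0<..} f"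
  by (rule integral_spike_set; rule negligible_subset[of "{0}"]) auto

lemma Dm_int: "Dm integrable_on {0<..}"
proof -
  have "(\<lambda>t::real. t powr (1/2 - 1) / exp t) integrable_on {0..}"
    using Gamma_integral_real[of "1/2"] by (auto simp: integrable_on_def)
  moreover have "(\<lambda>t::real. t powr (3/2 - 1) / exp t) integrable_on {0..}"
    using Gamma_integral_real[of "3/2"] by (auto simp: integrable_on_def)
  moreover have "(\<lambda>t::real. exp (- 1 * t)) integrable_on {0..}"
    by (rule integrable_on_exp_minus_to_infinity) simp
  ultimately have "(\<lambda>t::real. t powr (1/2 - 1) / exp t + 2 * exp (- 1 * t) + t powr (3/2 - 1) / exp t) integrable_on {0..}"
    by (intro integrable_add integrable_on_mult_right) 
  also have "(\<lambda>t::real. t powr (1/2 - 1) / exp t + 2 * exp (- 1 * t) + t powr (3/2 - 1) / exp t) = Dm"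
    by (auto simp: Dm_def fun_eq_iff field_simps exp_minus)
  finally show ?thesis by (simp add: spike0_int)
qed

lemma Dm_nonneg: "Dm t \<ge> 0"
  by (simp add: Dm_def)

lemma exp_bounds: "(t::real) \<ge> 0 \<Longrightarrow> 0 \<le> 1 - exp (-t) \<and> 1 - exp (-t) \<le> t"
  using exp_ge_add_one_self[of "-t"] by auto

lemma powr_quarter_bound:
  fixes t \<sigma> :: real
  assumes "t > 0" "\<bar>\<sigma>\<bar> \<le> 1/4"
  shows "t powr \<sigma> \<le> t powr (-1/4) + t powr (1/4)"
proof (cases "t \<le> 1")
  case True
  then have "t powr \<sigma> \<le> t powr (-1/4)" using assms by (intro powr_mono') auto
  then show ?thesis using powr_ge_zero[of t "1/4"] by linarith
next
  case False
  then have "t powr \<sigma> \<le> t powr (1/4)" using assms by (intro powr_mono) auto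
  then show ?thesis using powr_ge_zero[of t "-1/4"] by linarith
qed

lemma ln_quarter_bound:
  fixes t :: real
  assumes "t > 0"
  shows "\<bar>ln t\<bar> \<le> 4 * (t powr (-1/4) + t powr (1/4))"
proof (cases "t \<ge> 1")
  case True
  have "ln (t powr (1/4)) \<le> t powr (1/4) - 1" using assms by (intro ln_le_minus_one) auto
  moreover have "ln (t powr (1/4)) = ln t / 4" using assms by (simp add: ln_powr)
  moreover have "\<bar>ln t\<bar> = ln t" using True by simp
  moreover have "t powr (-1/4) \<ge> 0" by simp
  ultimately show ?thesis by argo
next
  case False
  have "ln (t powr (-1/4)) \<le> t powr (-1/4) - 1" using assms by (intro ln_le_minus_one) auto
  moreover have "ln (t powr (-1/4)) = - ln t / 4" using assms by (simp add: ln_powr)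
  moreover have "\<bar>ln t\<bar> = - ln t" using False assms by simp
  moreover have "t powr (1/4) \<ge> 0" by simp
  ultimately show ?thesis by argo
qed

lemma Dm_square: 
  fixes t :: real
  assumes "t > 0"
  shows "Dm t = (t powr (-1/4) + t powr (1/4))^2 * exp (-t)"
    and "t powr (-1/4) + t powr (1/4) \<le> (t powr (-1/4) + t powr (1/4))^2"
proof -
  define a where "a = t powr (1/4)"
  define b where "b = t powr (-1/4)"
  have ab: "a * b = 1" using assms by (simp add: a_def b_def flip: powr_add)
  have aa: "a * a = t powr (1/2)" using assms by (simp add: a_def flip: powr_add)
  have bb: "b * b = t powr (-1/2)" using assms by (simp add: b_def flip: powr_add)
  have "(b + a)^2 = t powr (-1/2) + 2 + t powr (1/2)"
    by (simp add: power2_eq_square algebra_simps aa bb) (simp add: ab flip: mult.assoc)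
  then show "Dm t = (t powr (-1/4) + t powr (1/4))^2 * exp (-t)"
    by (simp add: Dm_def a_def b_def)
  have "a > 0" "b > 0" using assms by (auto simp: a_def b_def)
  have "(a - b)^2 \<ge> 0" by simp
  then have "(b + a)^2 \<ge> 4" using ab by (simp add: power2_eq_square algebra_simps)
  then have "\<not> (b + a)^2 < 1" by linarith
  then have "b + a \<ge> 1" using \<open>a > 0\<close> \<open>b > 0\<close> by (auto simp: abs_square_less_1)
  then have "b + a \<le> (b + a)^2" by (simp add: power2_eq_square)
  then show "t powr (-1/4) + t powr (1/4) \<le> (t powr (-1/4) + t powr (1/4))^2"
    by (simp add: a_def b_def)
qed

lemma wt_norm:
  fixes t :: real
  assumes "t > 0"
  shows "norm (wt s t) = t powr (Re s - 1) * (exp (-t) * (1 - exp (-t)))"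
proof -
  have "norm (of_real t powr (s - 1)) = t powr (Re s - 1)"
    using assms by (subst norm_powr_real_powr) auto
  moreover have "1 - exp (-t) \<ge> 0" using assms by simp
  then have "norm (complex_of_real (exp (-t) * (1 - exp (-t)))) = exp (-t) * (1 - exp (-t))"
    unfolding norm_of_real by simp
  ultimately show ?thesis by (simp only: wt_def norm_mult)
qed

lemma wt_real_bound:
  fixes t \<sigma> :: real
  assumes "t > 0" "\<bar>\<sigma>\<bar> \<le> 1/4"
  shows "t powr (\<sigma> - 1) * (exp (-t) * (1 - exp (-t))) \<le> exp (-t) * t powr \<sigma>"
proof -
  have "t powr (\<sigma> - 1) * (1 - exp (-t)) \<le> t powr (\<sigma> - 1) * t"
    using exp_bounds[of t] assms by (intro mult_left_mono) auto
  also have "\<dots> = t powr \<sigma>" using assms by (simp add: powr_diff)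
  finally have h: "t powr (\<sigma> - 1) * (1 - exp (-t)) \<le> t powr \<sigma>" .
  have "t powr (\<sigma> - 1) * (exp (-t) * (1 - exp (-t))) = exp (-t) * (t powr (\<sigma> - 1) * (1 - exp (-t)))"
    by (simp add: algebra_simps)
  also have "\<dots> \<le> exp (-t) * t powr \<sigma>" using h by (intro mult_left_mono) auto
  finally show ?thesis .
qed

lemma wt_bound:
  fixes t :: real
  assumes "t > 0" "norm s \<le> 1/4"
  shows "norm (wt s t) \<le> Dm t"
proof -
  have s: "\<bar>Re s\<bar> \<le> 1/4" using abs_Re_le_cmod[of s] assms by linarith
  have "norm (wt s t) \<le> exp (-t) * t powr Re s"
    using wt_norm[OF assms(1)] wt_real_bound[OF assms(1) s] by simp
  also have "\<dots> \<le> exp (-t) * (t powr (-1/4) + t powr (1/4))"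
    using powr_quarter_bound[OF assms(1) s] by (intro mult_left_mono) auto
  also have "\<dots> \<le> exp (-t) * (t powr (-1/4) + t powr (1/4))^2"
    using Dm_square(2)[OF assms(1)] by (intro mult_left_mono) auto
  also have "\<dots> = Dm t" using Dm_square(1)[OF assms(1)] by simp
  finally show ?thesis .
qed

lemma wt_bound_ln:
  fixes t :: real
  assumes "t > 0" "norm s \<le> 1/4"
  shows "norm (of_real (ln t) * wt s t) \<le> 4 * Dm t"
proof -
  have s: "\<bar>Re s\<bar> \<le> 1/4" using abs_Re_le_cmod[of s] assms by linarith
  have "norm (of_real (ln t) * wt s t) \<le> \<bar>ln t\<bar> * (exp (-t) * t powr Re s)"
    using wt_norm[OF assms(1)] wt_real_bound[OF assms(1) s] 
    by (simp add: norm_mult mult_left_mono)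
  also have "\<dots> \<le> (4 * (t powr (-1/4) + t powr (1/4))) * (exp (-t) * (t powr (-1/4) + t powr (1/4)))"
    using powr_quarter_bound[OF assms(1) s] ln_quarter_bound[OF assms(1)]
    by (intro mult_mono) auto
  also have "\<dots> = 4 * Dm t" using Dm_square(1)[OF assms(1)] by (simp add: power2_eq_square)
  finally show ?thesis .
qed

lemma int_bound:
  fixes f :: "real \<Rightarrow> complex"
  assumes "continuous_on {0<..} f" "g integrable_on {0<..}" "\<And>t. t > 0 \<Longrightarrow> norm (f t) \<le> g t"
  shows "f integrable_on {0<..}"
proof -
  have "f \<in> borel_measurable (lebesgue_on {0<..})"
    by (rule continuous_imp_measurable_on_sets_lebesgue[OF assms(1)]) auto
  then have "f absolutely_integrable_on {0<..}"
    using measurable_bounded_by_integrable_imp_absolutely_integrable[OF _ _ assms(2)] assms(3) by auto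
  then show ?thesis using absolutely_integrable_on_def by blast
qed

lemma DD:
  fixes F F' :: "complex \<Rightarrow> real \<Rightarrow> complex" and S :: "real set"
  assumes r: "r > 0"
    and intF: "\<And>p. p \<in> ball p0 r \<Longrightarrow> F p integrable_on S"
    and der: "\<And>p x. p \<in> ball p0 r \<Longrightarrow> x \<in> S \<Longrightarrow> ((\<lambda>p. F p x) has_field_derivative F' p x) (at p)"
    and g: "g integrable_on S"
    and bnd: "\<And>p x. p \<in> ball p0 r \<Longrightarrow> x \<in> S \<Longrightarrow> norm (F' p x) \<le> g x"
  shows "((\<lambda>p. integral S (F p)) has_field_derivative integral S (F' p0)) (at p0)"
proof -
  have p0: "p0 \<in> ball p0 r" using r by simp
  have lip: "norm (F p x - F p0 x) \<le> g x * norm (p - p0)" if "p \<in> ball p0 r" "x \<in> S" for p x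
    using field_differentiable_bound[of "ball p0 r" "\<lambda>p. F p x" "\<lambda>p. F' p x" "g x" p p0] 
      that p0 der bnd by (auto intro: has_field_derivative_at_within)
  show ?thesis unfolding has_field_derivative_iff tendsto_at_iff_sequentially
  proof (intro allI impI)
    fix X :: "nat \<Rightarrow> complex" assume X: "\<forall>i. X i \<in> UNIV - {p0}" "X \<longlonglongrightarrow> p0"
    have "eventually (\<lambda>n. X n \<in> ball p0 r) sequentially"
      using X(2) r by (intro topological_tendstoD) auto
    then obtain N where N: "\<And>n. n \<ge> N \<Longrightarrow> X n \<in> ball p0 r"
      by (auto simp: eventually_sequentially)
    define f where "f = (\<lambda>k x. (F (X (k+N)) x - F p0 x) / (X (k+N) - p0))"
    have XN: "X (k+N) \<in> ball p0 r" "X (k+N) \<noteq> p0" for k using N X(1) by auto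
    have fint: "f k integrable_on S" for k
    proof -
      have "(\<lambda>x. F (X (k+N)) x - F p0 x) integrable_on S"
        using XN intF p0 by (intro integrable_diff) auto
      then have "(\<lambda>x. (F (X (k+N)) x - F p0 x) * inverse (X (k+N) - p0)) integrable_on S"
        by (rule integrable_on_mult_left)
      then show ?thesis by (simp add: f_def divide_inverse)
    qed
    have fb: "norm (f k x) \<le> g x" if "x \<in> S" for k x
    proof -
      have "norm (F (X (k+N)) x - F p0 x) \<le> g x * norm (X (k+N) - p0)" using lip[OF XN(1) that] .
      moreover have "norm (X (k+N) - p0) > 0" using XN by simp
      moreover have "norm (f k x) = norm (F (X (k+N)) x - F p0 x) / norm (X (k+N) - p0)"
        by (simp add: f_def norm_divide)
      ultimately show ?thesis by (simp add: pos_divide_le_eq)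
    qed
    have fl: "(\<lambda>k. f k x) \<longlonglongrightarrow> F' p0 x" if "x \<in> S" for x
    proof -
      have lim: "((\<lambda>y. (F y x - F p0 x) / (y - p0)) \<longlongrightarrow> F' p0 x) (at p0)"
        using der[OF p0 that] by (simp add: has_field_derivative_iff)
      have "(\<lambda>k. X (k+N)) \<longlonglongrightarrow> p0" using X(2) by (rule LIMSEQ_ignore_initial_segment)
      moreover have "eventually (\<lambda>k. X (k+N) \<noteq> p0) sequentially" using XN by auto
      ultimately have "filterlim (\<lambda>k. X (k+N)) (at p0) sequentially"
        by (simp add: filterlim_at)
      from filterlim_compose[OF lim this] show ?thesis by (simp add: f_def)
    qed
    have lim: "(\<lambda>k. integral S (f k)) \<longlonglongrightarrow> integral S (F' p0)"
      using dominated_convergence(2)[OF fint g fb fl] by blast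
    have eq: "integral S (f k) = (integral S (F (X (k+N))) - integral S (F p0)) / (X (k+N) - p0)" for k
    proof -
      have i1: "F (X (k+N)) integrable_on S" using intF XN(1) by blast
      have i2: "F p0 integrable_on S" using intF p0 by blast
      show ?thesis unfolding f_def by (simp only: integral_divide integral_diff[OF i1 i2])
    qed
    from lim have "(\<lambda>k. (integral S (F (X (k+N))) - integral S (F p0)) / (X (k+N) - p0)) \<longlonglongrightarrow> integral S (F' p0)"
      by (simp only: eq)
    then show "((\<lambda>p. (integral S (F p) - integral S (F p0)) / (p - p0)) \<circ> X) \<longlonglongrightarrow> integral S (F' p0)"
      unfolding o_def by (rule LIMSEQ_offset)
  qed
qed


lemma swap:
  fixes \<omega> :: "real \<Rightarrow> complex" and z :: complex
  assumes cont: "continuous_on {0<..} \<omega>" and g: "g integrable_on {0<..}"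
    and bnd: "\<And>t. t > 0 \<Longrightarrow> norm (\<omega> t) \<le> g t"
    and z: "z \<in> slit_plane" "norm z \<le> 1"
  shows "(\<lambda>n. z^n * integral {0<..} (\<lambda>t. \<omega> t * of_real (exp (- (real n * t))))) sums
           integral {0<..} (\<lambda>t. \<omega> t / (1 - z * of_real (exp (-t))))"
proof -
  obtain c where c: "c > 0" "\<forall>x\<in>{0..1::real}. c \<le> norm (1 - of_real x * z)"
    using slit_lb[OF z(1)] by blast
  have cb: "c \<le> norm (1 - z * of_real (exp (-t)))" if "t \<ge> 0" for t 
    using slit_lb_exp[OF c(2) that] .
  have ne: "1 - z * of_real (exp (-t)) \<noteq> 0" if "t \<ge> 0" for t 
    using cb[OF that] c(1) by auto
  have int_n: "(\<lambda>t. \<omega> t * of_real (exp (- (real n * t)))) integrable_on {0<..}" for n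
  proof (rule int_bound[OF _ g])
    show "continuous_on {0<..} (\<lambda>t. \<omega> t * of_real (exp (- (real n * t))))"
      by (intro continuous_intros cont)
    fix t :: real assume t: "t > 0"
    have "exp (- (real n * t)) \<le> 1" using t by simp
    then have "norm (\<omega> t) * exp (- (real n * t)) \<le> norm (\<omega> t)"
      by (intro mult_left_le) auto
    then show "norm (\<omega> t * of_real (exp (- (real n * t)))) \<le> g t"
      using bnd[OF t] by (simp add: norm_mult)
  qed
  define q where "q = (\<lambda>t. z * of_real (exp (-t)))"
  define fN where "fN = (\<lambda>N t. \<omega> t * ((1 - q t ^ N) / (1 - q t)))"
  have qn: "norm (q t) \<le> 1" if "t \<ge> 0" for t
    using z(2) that by (simp add: q_def norm_mult mult_le_one)
  have qlt: "norm (q t) < 1" if "t > 0" for t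
  proof -
    have "norm (q t) = norm z * exp (-t)" by (simp add: q_def norm_mult)
    also have "\<dots> \<le> exp (-t)" using z(2) by (simp add: mult_left_le_one_le)
    also have "\<dots> < 1" using that by simp
    finally show ?thesis .
  qed
  have psum: "(\<Sum>n<N. z^n * integral {0<..} (\<lambda>t. \<omega> t * of_real (exp (- (real n * t))))) 
               = integral {0<..} (fN N)" for N
  proof -
    have "(\<Sum>n<N. z^n * integral {0<..} (\<lambda>t. \<omega> t * of_real (exp (- (real n * t)))))
        = (\<Sum>n<N. integral {0<..} (\<lambda>t. z^n * (\<omega> t * of_real (exp (- (real n * t))))))"
      by simp
    also have "\<dots> = integral {0<..} (\<lambda>t. \<Sum>n<N. z^n * (\<omega> t * of_real (exp (- (real n * t)))))"
      by (rule integral_sum[symmetric]) (auto intro: integrable_on_mult_right int_n)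
    also have "\<dots> = integral {0<..} (fN N)"
    proof (rule integral_cong)
      fix t :: real assume t: "t \<in> {0<..}"
      have "(\<Sum>n<N. z^n * (\<omega> t * of_real (exp (- (real n * t))))) = \<omega> t * (\<Sum>n<N. q t ^ n)"
      proof -
        have "z^n * (\<omega> t * of_real (exp (- (real n * t)))) = \<omega> t * q t ^ n" for n
        proof -
          have "exp (- (real n * t)) = exp (-t) ^ n" using exp_of_nat_mult[of n "-t"] by simp
          then show ?thesis by (simp add: q_def power_mult_distrib)
        qed
        then have "(\<Sum>n<N. z^n * (\<omega> t * of_real (exp (- (real n * t))))) = (\<Sum>n<N. \<omega> t * q t ^ n)"
          by (simp only:)
        also have "\<dots> = \<omega> t * (\<Sum>n<N. q t ^ n)" by (simp add: sum_distrib_left)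
        finally show ?thesis .
      qed
      also have "\<dots> = fN N t" using ne[of t] t by (simp add: fN_def sum_gp_strict q_def)
      finally show "(\<Sum>n<N. z^n * (\<omega> t * of_real (exp (- (real n * t))))) = fN N t" .
    qed
    finally show ?thesis .
  qed
  have hint: "(\<lambda>t. (2 / c) * g t) integrable_on {0<..}"
    using g by (rule integrable_on_mult_right)
  have fNb: "norm (fN N t) \<le> (2 / c) * g t" if t: "t \<in> {0<..}" for N t
  proof -
    have "norm (1 - q t ^ N) \<le> 2"
    proof -
      have "norm (q t ^ N) \<le> 1" using qn[of t] t by (simp add: norm_power power_le_one)
      then show ?thesis using norm_triangle_ineq4[of 1 "q t ^ N"] by simp
    qed
    moreover have "c \<le> norm (1 - q t)" using cb[of t] t by (simp add: q_def)
    ultimately have "norm ((1 - q t ^ N) / (1 - q t)) \<le> 2 / c"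
      using c(1) by (simp add: norm_divide frac_le)
    then have "norm (\<omega> t) * norm ((1 - q t ^ N) / (1 - q t)) \<le> g t * (2 / c)"
      using bnd[of t] t order_trans[OF norm_ge_zero bnd[of t]] by (intro mult_mono) auto
    moreover have "norm (fN N t) = norm (\<omega> t) * norm ((1 - q t ^ N) / (1 - q t))" 
      by (simp only: fN_def norm_mult)
    ultimately show ?thesis by (metis mult.commute)
  qed
  have fNi: "fN N integrable_on {0<..}" for N
  proof (rule int_bound[OF _ hint])
    show "continuous_on {0<..} (fN N)"
      unfolding fN_def q_def using ne by (auto intro!: continuous_intros cont)
  qed (use fNb in auto)
  have fNl: "(\<lambda>N. fN N t) \<longlonglongrightarrow> \<omega> t / (1 - z * of_real (exp (-t)))" if t: "t \<in> {0<..}" for t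
  proof -
    have lim: "(\<lambda>N. q t ^ N) \<longlonglongrightarrow> 0" using qlt[of t] t by (intro LIMSEQ_power_zero) auto
    have nq: "1 - q t \<noteq> 0" using ne[of t] t by (simp add: q_def)
    have "(\<lambda>N. \<omega> t * ((1 - q t ^ N) / (1 - q t))) \<longlonglongrightarrow> \<omega> t * ((1 - 0) / (1 - q t))"
      by (rule tendsto_mult[OF tendsto_const tendsto_divide[OF tendsto_diff[OF tendsto_const lim] tendsto_const nq]])
    then show ?thesis by (simp add: fN_def q_def)
  qed
  have "(\<lambda>N. integral {0<..} (fN N)) \<longlonglongrightarrow> integral {0<..} (\<lambda>t. \<omega> t / (1 - z * of_real (exp (-t))))"
    by (rule dominated_convergence(2)[OF fNi hint fNb fNl])
  then show ?thesis unfolding sums_def psum .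
qed

lemma gamma_moment:
  assumes s: "Re s > 0" and m: "m > 0"
  shows "((\<lambda>t. of_real t powr (s - 1) * of_real (exp (- (m * t)))) has_integral Gamma s / of_real m powr s) {0<..}"
proof -
  define f0 where "f0 = (\<lambda>t::real. of_real t powr (s - 1) / of_real (exp t) :: complex)"
  have ai: "f0 absolutely_integrable_on {0<..}" 
    using absolutely_integrable_Gamma_integral'[OF s] by (simp add: f0_def)
  have hi: "(f0 has_integral Gamma s) {0<..}" 
    using Gamma_integral_complex'[OF s] by (simp add: f0_def)
  define G where "G = (\<lambda>x. indicator {0<..} x *\<^sub>R f0 x)"
  have iG: "integrable lebesgue G" using ai by (simp add: set_integrable_def G_def)
  have IG: "integral\<^sup>L lebesgue G = Gamma s"
    using set_lebesgue_integral_eq_integral(2)[OF ai] integral_unique[OF hi] 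
    by (simp add: set_lebesgue_integral_def G_def)
  have iG2: "integrable lebesgue (\<lambda>x. G (m * x))" 
    using lebesgue_integrable_real_affine[OF iG, of m 0] m by simp
  have IG2: "integral\<^sup>L lebesgue G = m *\<^sub>R integral\<^sup>L lebesgue (\<lambda>x. G (m * x))" 
    using lebesgue_integral_real_affine[of m G 0] m by simp
  have G2: "G (m * x) = indicator {0<..} x *\<^sub>R f0 (m * x)" for x 
    using m by (simp add: G_def indicator_def zero_less_mult_iff)
  have si: "set_integrable lebesgue {0<..} (\<lambda>x. f0 (m * x))" 
    using iG2 G2 by (simp add: set_integrable_def)
  have L: "(LINT x:{0<..}|lebesgue. f0 (m * x)) = Gamma s / of_real m"
  proof -
    have "(LINT x:{0<..}|lebesgue. f0 (m * x)) = integral\<^sup>L lebesgue (\<lambda>x. G (m * x))"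
      by (simp add: set_lebesgue_integral_def G2)
    also have "\<dots> = Gamma s / of_real m" using IG IG2 m by (simp add: scaleR_conv_of_real field_simps)
    finally show ?thesis .
  qed
  have h1: "((\<lambda>x. f0 (m * x)) has_integral Gamma s / of_real m) {0<..}" 
    using has_integral_set_lebesgue[OF si] L by simp
  then have "((\<lambda>x. of_real m powr (1 - s) * f0 (m * x)) has_integral of_real m powr (1 - s) * (Gamma s / of_real m)) {0<..}"
    by (rule has_integral_mult_right)
  moreover have "of_real m powr (1 - s) * (Gamma s / of_real m) = Gamma s / of_real m powr s"
    using m by (simp add: powr_diff field_simps)
  moreover have "of_real m powr (1 - s) * f0 (m * x) = of_real x powr (s - 1) * of_real (exp (- (m * x)))" 
    if x: "x \<in> {0<..}" for x
  proof -
    have "(of_real (m * x) :: complex) powr (s - 1) = of_real m powr (s - 1) * of_real x powr (s - 1)"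
      using m x by (simp add: powr_times_real)
    moreover have "of_real m powr (1 - s) * of_real m powr (s - 1) = (1 :: complex)"
      using m by (simp flip: powr_add)
    ultimately show ?thesis
      by (simp add: f0_def exp_minus field_simps)
  qed
  ultimately show ?thesis using has_integral_cong by (metis (no_types, lifting))
qed


lemma conv01:
  fixes F :: "real \<Rightarrow> complex"
  assumes cF: "continuous_on {0..1} F"
  shows "((\<lambda>t. of_real (exp (-t)) * F (exp (-t))) has_integral integral {0..1} F) {0<..}"
proof -
  have "bounded (F ` {0..1})"
    by (rule compact_imp_bounded[OF compact_continuous_image[OF cF compact_Icc]])
  then obtain B where "\<forall>y\<in>F ` {0..1}. norm y \<le> B" by (auto simp: bounded_iff)
  then have B: "\<And>x. x \<in> {0..1} \<Longrightarrow> norm (F x) \<le> B" by blast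
  define h where "h = (\<lambda>t. of_real (exp (-t)) * F (exp (-t)))"
  have eb: "exp (-t) \<in> {0..1}" if "t \<ge> 0" for t :: real using that by auto
  have hc: "continuous_on {0..} h" unfolding h_def 
    by (intro continuous_intros continuous_on_compose2[OF cF]) auto
  have hb: "norm (h t) \<le> B * exp (-t)" if "t \<ge> 0" for t
  proof -
    have "norm (h t) = exp (-t) * norm (F (exp (-t)))" by (simp add: h_def norm_mult)
    also have "\<dots> \<le> exp (-t) * B" using B[OF eb[OF that]] by (intro mult_left_mono) auto
    finally show ?thesis by (simp add: mult.commute)
  qed
  have eint: "(\<lambda>t. B * exp (-t)) integrable_on {0<..}"
  proof -
    have "(\<lambda>t::real. exp (- 1 * t)) integrable_on {0..}"
      by (rule integrable_on_exp_minus_to_infinity) simp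
    then have "(\<lambda>t::real. B * exp (- 1 * t)) integrable_on {0..}"
      by (rule integrable_on_mult_right)
    then show ?thesis by (simp add: spike0_int)
  qed
  have hint: "h integrable_on {0<..}"
    by (rule int_bound[OF continuous_on_subset[OF hc] eint]) (use hb in auto)
  have sub: "(h has_integral integral {exp (-b)..1} F) {0..b}" if b: "b > 0" for b
  proof -
    have "((\<lambda>x. (- exp (-x)) *\<^sub>R F (exp (-x))) has_integral 
          (integral {exp (-0)..exp (-b)} F - integral {exp (-b)..exp (-0)} F)) {0..b}"
      by (rule has_integral_substitution_general[of "{}" 0 b "\<lambda>x. exp(-x)" 0 1 F "\<lambda>x. - exp (-x)"])
         (use b in \<open>auto intro!: continuous_intros derivative_eq_intros cF\<close>)
    moreover have "{exp (-0)..exp (-b)} = {}" using b by auto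
    ultimately have "((\<lambda>x. - (of_real (exp (-x)) * F (exp (-x)))) has_integral 
          (- integral {exp (-b)..1} F)) {0..b}"
      by (simp add: scaleR_conv_of_real)
    from has_integral_neg[OF this] show ?thesis by (simp add: h_def)
  qed
  define fk where "fk = (\<lambda>k t. if t \<in> {0..real (Suc k)} then h t else 0)"
  have fk_int: "(fk k has_integral integral {exp (- real (Suc k))..1} F) {0<..}" for k
  proof -
    have "(h has_integral integral {exp (- real (Suc k))..1} F) {0..real (Suc k)}"
      by (rule sub) simp
    moreover have "(h has_integral integral {exp (- real (Suc k))..1} F) {0..real (Suc k)} \<longleftrightarrow>
        (h has_integral integral {exp (- real (Suc k))..1} F) ({0..real (Suc k)} \<inter> {0<..})"
      by (rule has_integral_spike_set_eq; rule negligible_subset[of "{0}"]) auto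
    ultimately have "(h has_integral integral {exp (- real (Suc k))..1} F) ({0..real (Suc k)} \<inter> {0<..})"
      by blast
    then show ?thesis by (simp only: fk_def has_integral_restrict_Int)
  qed
  have fkb: "norm (fk k t) \<le> B * exp (-t)" if "t \<in> {0<..}" for k t
    using hb[of t] that order_trans[OF norm_ge_zero hb[of t]] by (auto simp: fk_def)
  have fkl: "(\<lambda>k. fk k t) \<longlonglongrightarrow> h t" if "t \<in> {0<..}" for t
  proof -
    obtain n where n: "t \<le> real n" using real_arch_simple by blast
    have "eventually (\<lambda>k. fk k t = h t) sequentially"
      unfolding eventually_sequentially
      using n that by (intro exI[of _ n]) (auto simp: fk_def)
    then show ?thesis by (rule tendsto_eventually)
  qed
  have L1: "(\<lambda>k. integral {0<..} (fk k)) \<longlonglongrightarrow> integral {0<..} h"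
    by (rule dominated_convergence(2)[OF _ eint fkb fkl]) (use fk_int in blast)
  have L2: "(\<lambda>k. integral {exp (- real (Suc k))..1} F) \<longlonglongrightarrow> integral {0..1} F"
  proof -
    have c: "continuous_on {0..1} (\<lambda>x. integral {x..1} F)"
      by (rule indefinite_integral_continuous_1'[OF integrable_continuous_real[OF cF]])
    have e: "(\<lambda>k. exp (- real (Suc k))) \<longlonglongrightarrow> 0"
    proof -
      have "(\<lambda>k. exp (-1) ^ Suc k) \<longlonglongrightarrow> (0::real)"
        by (rule LIMSEQ_Suc, rule LIMSEQ_power_zero) simp
      moreover have "exp (- real (Suc k)) = exp (-1) ^ Suc k" for k
        using exp_of_nat_mult[of "Suc k" "-1"] by simp
      ultimately show ?thesis by simp
    qed
    have "(\<lambda>k. integral {exp (- real (Suc k))..1} F) \<longlonglongrightarrow> integral {0..1} F"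
      by (rule continuous_on_tendsto_compose[OF c e]) auto
    then show ?thesis .
  qed
  have ik: "integral {0<..} (fk k) = integral {exp (- real (Suc k))..1} F" for k
    using fk_int[of k] by (rule integral_unique)
  have L1': "(\<lambda>k. integral {exp (- real (Suc k))..1} F) \<longlonglongrightarrow> integral {0<..} h"
    using L1 by (simp only: ik)
  have eq: "integral {0<..} h = integral {0..1} F"
    by (rule LIMSEQ_unique[OF L1' L2])
  have "(h has_integral integral {0<..} h) {0<..}" by (rule integrable_integral[OF hint])
  then show ?thesis unfolding eq by (simp only: h_def)
qed

lemma exp_moment:
  "((\<lambda>t. of_real (exp (-t)) * of_real (exp (- (real n * t))) :: complex) has_integral 1 / of_nat (Suc n)) {0<..}"
proof -
  have h: "((\<lambda>x. exp (- real (Suc n) * x)) has_integral 1 / real (Suc n)) {0..}"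
    using has_integral_exp_minus_to_infinity[of "real (Suc n)" 0] by simp
  have "((\<lambda>x. complex_of_real (exp (- real (Suc n) * x))) has_integral complex_of_real (1 / real (Suc n))) {0..}"
    using has_integral_linear[OF h, of "complex_of_real"] bounded_linear_of_real by (simp add: o_def)
  moreover have "complex_of_real (1 / real (Suc n)) = 1 / of_nat (Suc n)" by simp
  ultimately have "((\<lambda>x. complex_of_real (exp (- real (Suc n) * x))) has_integral 1 / of_nat (Suc n)) {0<..}"
    by (simp only: spike0)
  moreover have "complex_of_real (exp (- real (Suc n) * x)) = of_real (exp (-x)) * of_real (exp (- (real n * x)))" for x
    by (simp add: algebra_simps flip: exp_add of_real_mult)
  ultimately show ?thesis by simp
qed

lemma slit_nonpos:
  assumes "z \<in> slit_plane" "x \<in> {0..1::real}"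
  shows "1 - of_real x * z \<notin> \<real>\<^sub>\<le>\<^sub>0"
proof
  assume h: "1 - of_real x * z \<in> \<real>\<^sub>\<le>\<^sub>0"
  then obtain r where r: "r \<le> 0" "1 - of_real x * z = of_real r" by (auto elim!: nonpos_Reals_cases)
  then have xz: "of_real x * z = of_real (1 - r)" by (simp add: algebra_simps)
  then have "x \<noteq> 0" using r by auto
  then have "z = of_real ((1 - r) / x)" using xz by (simp add: field_simps)
  moreover have "(1 - r) / x \<ge> 1" using assms(2) \<open>x \<noteq> 0\<close> r by (auto simp: field_simps)
  ultimately show False using assms(1) by (auto simp: slit_plane_iff)
qed

definition Pf :: "complex \<Rightarrow> complex" where
  "Pf z = integral {0<..} (\<lambda>t. of_real (exp (-t)) / (1 - z * of_real (exp (-t))))"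

lemma Pf_eq:
  assumes z: "z \<in> slit_plane"
  shows "z * Pf z = - Ln (1 - z)"
proof (cases "z = 0")
  case True then show ?thesis by simp
next
  case False
  define F where "F = (\<lambda>x::real. 1 / (1 - of_real x * z))"
  have cF: "continuous_on {0..1} F" unfolding F_def
    using slit_nonzero[OF z] by (auto intro!: continuous_intros)
  have "Pf z = integral {0..1} F"
  proof -
    have "((\<lambda>t. of_real (exp (-t)) * F (exp (-t))) has_integral integral {0..1} F) {0<..}"
      by (rule conv01[OF cF])
    then have "((\<lambda>t. of_real (exp (-t)) / (1 - z * of_real (exp (-t)))) has_integral integral {0..1} F) {0<..}"
      by (simp add: F_def mult.commute)
    then show ?thesis by (simp add: Pf_def integral_unique)
  qed
  moreover have "(F has_integral ((\<lambda>x. - Ln (1 - of_real x * z) / z) 1 - (\<lambda>x. - Ln (1 - of_real x * z) / z) 0)) {0..1}"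
  proof (rule fundamental_theorem_of_calculus)
    fix x :: real assume x: "x \<in> {0..1}"
    have d: "((\<lambda>w. Ln (1 - w * z)) has_field_derivative inverse (1 - of_real x * z) * (- z)) (at (of_real x))"
      using slit_nonpos[OF z x] by (auto intro!: derivative_eq_intros)
    have "((\<lambda>w. - Ln (1 - w * z) / z) has_field_derivative - (inverse (1 - of_real x * z) * (- z)) / z) (at (of_real x))"
      using DERIV_cdivide[OF DERIV_minus[OF d], of z] by simp
    moreover have "- (inverse (1 - of_real x * z) * (- z)) / z = inverse (1 - of_real x * z) * (z * inverse z)"
      by (simp add: divide_inverse mult.assoc)
    moreover have "z * inverse z = 1" using False by simp
    moreover have "inverse (1 - of_real x * z) = F x" by (simp add: F_def inverse_eq_divide)
    ultimately have "((\<lambda>w. - Ln (1 - w * z) / z) has_field_derivative F x) (at (of_real x))" by simp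
    then show "((\<lambda>x. - Ln (1 - of_real x * z) / z) has_vector_derivative F x) (at x within {0..1})"
      by (rule has_vector_derivative_real_field)
  qed simp
  ultimately show ?thesis using False by (simp add: integral_unique)
qed


definition Qf :: "complex \<Rightarrow> complex \<Rightarrow> complex" where
  "Qf s z = integral {0<..} (\<lambda>t. wt s t / (1 - z * of_real (exp (-t))))"

definition Mf :: "complex \<Rightarrow> nat \<Rightarrow> complex" where
  "Mf s n = integral {0<..} (\<lambda>t. wt s t * of_real (exp (- (real n * t))))"

lemma wt_cont: "continuous_on {0<..} (wt s)"
  unfolding wt_def by (auto intro!: continuous_intros)

lemma Dm_int_c: "(\<lambda>t. K * Dm t) integrable_on {0<..}"
  using Dm_int by (rule integrable_on_mult_right)

lemma wt_holo:
  fixes k :: "real \<Rightarrow> complex"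
  assumes kc: "continuous_on {0<..} k" and kb: "\<And>t. t > 0 \<Longrightarrow> norm (k t) \<le> K" 
    and p0: "norm p0 < 1/4"
  shows "((\<lambda>s. integral {0<..} (\<lambda>t. wt s t * k t)) has_field_derivative 
            integral {0<..} (\<lambda>t. of_real (ln t) * wt p0 t * k t)) (at p0)"
proof -
  define r where "r = 1/4 - norm p0"
  have r: "r > 0" using p0 by (simp add: r_def)
  have pb: "norm p \<le> 1/4" if "p \<in> ball p0 r" for p
  proof -
    have "norm p \<le> norm p0 + norm (p - p0)" using norm_triangle_ineq2[of p p0] by simp
    also have "norm (p - p0) < r" using that by (simp add: dist_norm norm_minus_commute)
    finally show ?thesis by (simp add: r_def)
  qed
  show ?thesis
  proof (rule DD[OF r, where g = "\<lambda>t. (4 * K) * Dm t"])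
    show "(\<lambda>t. (4 * K) * Dm t) integrable_on {0<..}" by (rule Dm_int_c)
  next
    fix p assume p: "p \<in> ball p0 r"
    show "(\<lambda>t. wt p t * k t) integrable_on {0<..}"
    proof (rule int_bound[OF _ Dm_int_c[of K]])
      show "continuous_on {0<..} (\<lambda>t. wt p t * k t)" 
        by (intro continuous_intros wt_cont kc)
      fix t :: real assume t: "t > 0"
      have "norm (wt p t) * norm (k t) \<le> Dm t * K"
        using wt_bound[OF t pb[OF p]] kb[OF t] Dm_nonneg[of t] by (intro mult_mono) auto
      then show "norm (wt p t * k t) \<le> K * Dm t" by (simp add: norm_mult mult.commute)
    qed
  next
    fix p and x :: real assume p: "p \<in> ball p0 r" and x: "x \<in> {0<..}"
    have d1: "((\<lambda>p. of_real x powr p) has_field_derivative Ln (of_real x) * of_real x powr (p - 1)) (at (p - 1))"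
      by (rule has_field_derivative_powr_right) (use x in simp)
    have d2: "((\<lambda>p. p - 1) has_field_derivative 1) (at p)" by (auto intro!: derivative_eq_intros)
    have "((\<lambda>p. of_real x powr (p - 1)) has_field_derivative Ln (of_real x) * of_real x powr (p - 1)) (at p)"
      using DERIV_chain2[OF d1 d2] by simp
    then have "((\<lambda>p. of_real x powr (p - 1) * (of_real (exp (-x) * (1 - exp (-x))) * k x)) has_field_derivative 
              Ln (of_real x) * of_real x powr (p - 1) * (of_real (exp (-x) * (1 - exp (-x))) * k x)) (at p)"
      by (rule DERIV_cmult_right)
    moreover have "Ln (of_real x) = of_real (ln x)" using x by (simp add: Ln_of_real)
    ultimately show "((\<lambda>p. wt p x * k x) has_field_derivative of_real (ln x) * wt p x * k x) (at p)"
      by (simp add: wt_def mult.assoc)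
  next
    fix p and x :: real assume p: "p \<in> ball p0 r" and x: "x \<in> {0<..}"
    have "norm (of_real (ln x) * wt p x) * norm (k x) \<le> (4 * Dm x) * K"
      using wt_bound_ln[of x p] pb[OF p] kb[of x] x Dm_nonneg[of x] by (intro mult_mono) auto
    then show "norm (of_real (ln x) * wt p x * k x) \<le> 4 * K * Dm x"
      by (simp add: norm_mult mult_ac)
  qed
qed

lemma Mf_deriv:
  assumes "norm p0 < 1/4"
  shows "\<exists>D. ((\<lambda>s. Mf s n) has_field_derivative D) (at p0)"
proof -
  have "((\<lambda>s. integral {0<..} (\<lambda>t. wt s t * of_real (exp (- (real n * t))))) has_field_derivative 
            integral {0<..} (\<lambda>t. of_real (ln t) * wt p0 t * of_real (exp (- (real n * t))))) (at p0)"
    by (rule wt_holo[where K=1]) (use assms in \<open>auto intro!: continuous_intros\<close>)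
  then show ?thesis unfolding Mf_def by blast
qed

lemma Mf_holo: "(\<lambda>s. Mf s n) holomorphic_on ball 0 (1/4)"
  using Mf_deriv by (auto simp: holomorphic_on_open)

lemma Qf_deriv_s:
  assumes z: "z \<in> slit_plane" and p0: "norm p0 < 1/4"
  shows "\<exists>D. ((\<lambda>s. Qf s z) has_field_derivative D) (at p0)"
proof -
  obtain c where c: "c > 0" "\<forall>x\<in>{0..1::real}. c \<le> norm (1 - of_real x * z)"
    using slit_lb[OF z] by blast
  define k where "k = (\<lambda>t::real. 1 / (1 - z * of_real (exp (-t))))"
  have cb: "c \<le> norm (1 - z * of_real (exp (-t)))" if "t \<ge> 0" for t 
    using slit_lb_exp[OF c(2) that] .
  have ne: "z * of_real (exp (-t)) \<noteq> 1" if "t \<ge> 0" for t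
    using cb[OF that] c(1) by auto
  have kc: "continuous_on {0<..} k" unfolding k_def
    using ne by (auto intro!: continuous_intros)
  have kb: "norm (k t) \<le> 1 / c" if "t > 0" for t
    using cb[of t] that c(1) by (simp add: k_def norm_divide frac_le)
  have "((\<lambda>s. integral {0<..} (\<lambda>t. wt s t * k t)) has_field_derivative 
            integral {0<..} (\<lambda>t. of_real (ln t) * wt p0 t * k t)) (at p0)"
    by (rule wt_holo[OF kc kb p0])
  moreover have "(\<lambda>s. integral {0<..} (\<lambda>t. wt s t * k t)) = (\<lambda>s. Qf s z)"
    by (simp add: Qf_def k_def)
  ultimately show ?thesis by auto
qed

lemma Qf_holo_z:
  assumes s: "norm s \<le> 1/4"
  shows "Qf s holomorphic_on slit_plane"
proof -
  have "\<exists>D. (Qf s has_field_derivative D) (at z0)" if z0: "z0 \<in> slit_plane" for z0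
  proof -
    obtain c r where c: "c > 0" "r > 0" "ball z0 r \<subseteq> slit_plane"
      "\<forall>z\<in>ball z0 r. \<forall>x\<in>{0..1::real}. c \<le> norm (1 - of_real x * z)"
      using slit_lb_ball[OF z0] by blast
    have cb: "c \<le> norm (1 - z * of_real (exp (-t)))" if "z \<in> ball z0 r" "t \<ge> 0" for z t
      using slit_lb_exp[of c z t] c(4) that by blast
    have ne: "1 - z * of_real (exp (-t)) \<noteq> 0" if "z \<in> ball z0 r" "t \<ge> 0" for z t
      using cb[OF that] c(1) by auto
    have "((\<lambda>z. integral {0<..} (\<lambda>t. wt s t / (1 - z * of_real (exp (-t))))) has_field_derivative 
           integral {0<..} (\<lambda>t. wt s t * of_real (exp (-t)) / (1 - z0 * of_real (exp (-t)))^2)) (at z0)"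
    proof (rule DD[OF c(2), where g = "\<lambda>t. (1 / c^2) * Dm t"])
      show "(\<lambda>t. (1 / c^2) * Dm t) integrable_on {0<..}" by (rule Dm_int_c)
    next
      fix z assume z: "z \<in> ball z0 r"
      show "(\<lambda>t. wt s t / (1 - z * of_real (exp (-t)))) integrable_on {0<..}"
      proof (rule int_bound[OF _ Dm_int_c[of "1/c"]])
        show "continuous_on {0<..} (\<lambda>t. wt s t / (1 - z * of_real (exp (-t))))"
          using ne[OF z] by (auto intro!: continuous_intros wt_cont)
        fix t :: real assume t: "t > 0"
        have "norm (wt s t) / norm (1 - z * of_real (exp (-t))) \<le> Dm t / c"
          using wt_bound[OF t s] cb[OF z, of t] t c(1) Dm_nonneg[of t] by (intro frac_le) auto
        then show "norm (wt s t / (1 - z * of_real (exp (-t)))) \<le> 1 / c * Dm t" 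
          by (simp add: norm_divide)
      qed
    next
      fix z and t :: real assume z: "z \<in> ball z0 r" and t: "t \<in> {0<..}"
      show "((\<lambda>z. wt s t / (1 - z * of_real (exp (-t)))) has_field_derivative 
              wt s t * of_real (exp (-t)) / (1 - z * of_real (exp (-t)))^2) (at z)"
        using ne[OF z, of t] t by (auto intro!: derivative_eq_intros simp: power2_eq_square)
    next
      fix z and t :: real assume z: "z \<in> ball z0 r" and t: "t \<in> {0<..}"
      have "norm (wt s t * of_real (exp (-t))) \<le> Dm t"
        using wt_bound[of t s] t s by (simp add: norm_mult mult_le_one order_trans[OF mult_right_le_one_le])
      moreover have "c^2 \<le> norm ((1 - z * of_real (exp (-t)))^2)"
        using cb[OF z, of t] t c(1) by (simp add: norm_power power_mono)
      ultimately have "norm (wt s t * of_real (exp (-t))) / norm ((1 - z * of_real (exp (-t)))^2) \<le> Dm t / c^2"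
        using c(1) Dm_nonneg[of t] by (intro frac_le) auto
      then show "norm (wt s t * of_real (exp (-t)) / (1 - z * of_real (exp (-t)))^2) \<le> 1 / c^2 * Dm t"
        by (simp add: norm_divide)
    qed
    then show ?thesis unfolding Qf_def by blast
  qed
  then show ?thesis using open_slit by (simp add: holomorphic_on_open)
qed


lemma nonpos_Re: "s \<in> \<int>\<^sub>\<le>\<^sub>0 \<Longrightarrow> Re s \<le> 0"
  by (auto elim!: nonpos_Ints_cases')

lemma exp_split: 
  "exp (-t) * (1 - exp (-t)) * exp (- (real n * t)) = exp (- (real (Suc n) * t)) - exp (- (real (Suc (Suc n)) * t))"
proof -
  have a: "exp (- (real (Suc n) * t)) = exp (-t) * exp (- (real n * t))"
    by (simp add: algebra_simps flip: exp_add)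
  have b: "exp (- (real (Suc (Suc n)) * t)) = exp (-t) * exp (-t) * exp (- (real n * t))"
    by (simp add: algebra_simps flip: exp_add)
  show ?thesis unfolding a b by (simp add: algebra_simps)
qed

lemma Mf_pos:
  assumes s: "Re s > 0"
  shows "Mf s n = Gamma s / of_nat (Suc n) powr s - Gamma s / of_nat (Suc (Suc n)) powr s"
proof -
  have h1: "((\<lambda>t. of_real t powr (s - 1) * of_real (exp (- (real (Suc n) * t)))) has_integral Gamma s / of_nat (Suc n) powr s) {0<..}"
    using gamma_moment[OF s, of "real (Suc n)"] by (simp only: of_real_of_nat_eq)
  have h2: "((\<lambda>t. of_real t powr (s - 1) * of_real (exp (- (real (Suc (Suc n)) * t)))) has_integral Gamma s / of_nat (Suc (Suc n)) powr s) {0<..}"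
    using gamma_moment[OF s, of "real (Suc (Suc n))"] by (simp only: of_real_of_nat_eq)
  have h: "((\<lambda>t. of_real t powr (s - 1) * of_real (exp (- (real (Suc n) * t))) - of_real t powr (s - 1) * of_real (exp (- (real (Suc (Suc n)) * t))))
     has_integral Gamma s / of_nat (Suc n) powr s - Gamma s / of_nat (Suc (Suc n)) powr s) {0<..}"
    by (rule has_integral_diff[OF h1 h2])
  have e: "of_real t powr (s - 1) * of_real (exp (- (real (Suc n) * t))) - of_real t powr (s - 1) * of_real (exp (- (real (Suc (Suc n)) * t)))
        = wt s t * of_real (exp (- (real n * t)))" for t
  proof -
    have "wt s t * of_real (exp (- (real n * t))) = of_real t powr (s - 1) * of_real (exp (-t) * (1 - exp (-t)) * exp (- (real n * t)))"
      by (simp add: wt_def mult.assoc)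
    also have "\<dots> = of_real t powr (s - 1) * (of_real (exp (- (real (Suc n) * t))) - of_real (exp (- (real (Suc (Suc n)) * t))))"
      by (simp only: exp_split of_real_diff)
    finally show ?thesis by (simp add: algebra_simps)
  qed
  from h show ?thesis unfolding e Mf_def by (rule integral_unique)
qed

lemma M1:
  assumes "norm s < 1/4"
  shows "rGamma s * Mf s n = 1 / of_nat (Suc n) powr s - 1 / of_nat (Suc (Suc n)) powr s"
proof -
  let ?B = "ball (0::complex) (1/4)" 
  let ?U = "ball (0::complex) (1/4) \<inter> {s. Re s > 0}"
  have holL: "(\<lambda>s. rGamma s * Mf s n) holomorphic_on ?B" 
    by (rule holomorphic_on_mult[OF holomorphic_rGamma Mf_holo])
  have holR: "(\<lambda>s. 1 / of_nat (Suc n) powr s - 1 / of_nat (Suc (Suc n)) powr s) holomorphic_on ?B"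
    by (intro holomorphic_intros holomorphic_on_powr_right) auto
  have eq: "rGamma s * Mf s n = 1 / of_nat (Suc n) powr s - 1 / of_nat (Suc (Suc n)) powr s" 
    if s: "s \<in> ?U" for s
  proof -
    have "Re s > 0" using s by auto
    then have "s \<notin> \<int>\<^sub>\<le>\<^sub>0" using nonpos_Re by force
    then have rg: "rGamma s * Gamma s = 1" by (simp add: Gamma_def rGamma_nonzero)
    have "rGamma s * Mf s n = (rGamma s * Gamma s) / of_nat (Suc n) powr s - (rGamma s * Gamma s) / of_nat (Suc (Suc n)) powr s"
      using Mf_pos[OF \<open>Re s > 0\<close>] by (simp add: right_diff_distrib)
    then show ?thesis by (simp only: rg)
  qed
  have "open ?U" by (intro open_Int open_ball open_halfspace_Re_gt)
  moreover have "?U \<noteq> {}" by (intro ex_in_conv[THEN iffD1] exI[of _ "1/8"]) auto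
  moreover have "connected ?B" by (rule convex_connected) simp
  ultimately show ?thesis
    using analytic_continuation_open[of ?U ?B "\<lambda>s. rGamma s * Mf s n" 
          "\<lambda>s. 1 / of_nat (Suc n) powr s - 1 / of_nat (Suc (Suc n)) powr s" s] holL holR eq assms
    by auto
qed

lemma Mf0: "Mf 0 n = of_real (ln (real (Suc (Suc n))) - ln (real (Suc n)))"
proof -
  have rg: "(rGamma has_field_derivative 1) (at 0)" 
    using has_field_derivative_rGamma_nonpos_int[of 0 UNIV] by simp
  obtain D where mf: "((\<lambda>s. Mf s n) has_field_derivative D) (at 0)" 
    using Mf_deriv[of 0 n] by auto
  have d1: "((\<lambda>s. rGamma s * Mf s n) has_field_derivative Mf 0 n) (at 0)" 
    using DERIV_mult[OF rg mf] by simp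
  have d1': "((\<lambda>s. 1 / of_nat (Suc n) powr s - 1 / of_nat (Suc (Suc n)) powr s) has_field_derivative Mf 0 n) (at 0)"
    by (rule has_field_derivative_transform_within_open[OF d1 open_ball[of 0 "1/4"]]) (auto simp: M1)
  have d2: "((\<lambda>s. 1 / of_nat (Suc n) powr s - 1 / of_nat (Suc (Suc n)) powr s) has_field_derivative 
             (Ln (of_nat (Suc (Suc n))) - Ln (of_nat (Suc n)))) (at 0)"
  proof -
    have a: "complex_of_nat (Suc n) \<noteq> 0" by (simp only: of_nat_eq_0_iff)
    have b: "complex_of_nat (Suc (Suc n)) \<noteq> 0" by (simp only: of_nat_eq_0_iff)
    have a': "1 + complex_of_nat n \<noteq> 0" using a by simp
    have b': "2 + complex_of_nat n \<noteq> 0" using b by simp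
    show ?thesis using a b a' b' by (auto intro!: derivative_eq_intros)
  qed
  have "Mf 0 n = Ln (of_nat (Suc (Suc n))) - Ln (of_nat (Suc n))"
    by (rule DERIV_unique[OF d1' d2])
  then show ?thesis by (simp only: Ln_of_nat zero_less_Suc of_real_diff)
qed


lemma summable_Suc_pow:
  fixes x :: real assumes "norm x < 1"
  shows "summable (\<lambda>n. real (Suc n) * x ^ n)"
proof -
  have "summable (\<lambda>n. diffs (\<lambda>n. 1::real) n * x ^ n)"
    by (rule termdiff_converges[of x 1]) (use assms in \<open>auto simp: summable_geometric\<close>)
  then show ?thesis by (simp add: diffs_def)
qed

lemma summable_pl:
  fixes s z :: complex
  assumes s: "norm s < 1/4" and z: "norm z < 1"
  shows "summable (\<lambda>n. z ^ Suc n / of_nat (Suc n) powr s)"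
proof (rule summable_comparison_test'[where g="\<lambda>n. real (Suc n) * norm z ^ n" and N=0])
  show "summable (\<lambda>n. real (Suc n) * norm z ^ n)" using z by (intro summable_Suc_pow) simp
  fix n :: nat
  have rs: "- Re s \<le> 1" using abs_Re_le_cmod[of s] s by linarith
  have "norm (of_nat (Suc n) powr s :: complex) = real (Suc n) powr Re s"
    by (subst norm_powr_real_powr) auto
  then have "norm (z ^ Suc n / of_nat (Suc n) powr s) = norm z ^ Suc n / real (Suc n) powr Re s"
    by (simp only: norm_divide norm_power)
  also have "\<dots> = norm z ^ Suc n * real (Suc n) powr (- Re s)"
    by (simp add: powr_minus divide_inverse)
  also have "\<dots> \<le> norm z ^ n * real (Suc n)"
  proof (rule mult_mono)
    show "norm z ^ Suc n \<le> norm z ^ n" using z by (simp add: mult_left_le_one_le)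
    have "real (Suc n) powr (- Re s) \<le> real (Suc n) powr 1" by (rule powr_mono[OF rs]) simp
    then show "real (Suc n) powr (- Re s) \<le> real (Suc n)" by simp
  qed auto
  finally show "norm (z ^ Suc n / of_nat (Suc n) powr s) \<le> real (Suc n) * norm z ^ n" 
    by (simp add: mult.commute)
qed

lemma summable_lnser:
  fixes z :: complex
  assumes z: "norm z < 1"
  shows "summable (\<lambda>n. z ^ n * Ln (of_nat (Suc n)))"
proof (rule summable_comparison_test'[where g="\<lambda>n. real (Suc n) * norm z ^ n" and N=0])
  show "summable (\<lambda>n. real (Suc n) * norm z ^ n)" using z by (intro summable_Suc_pow) simp
  fix n :: nat
  have "ln (real (Suc n)) \<le> real (Suc n) - 1" by (rule ln_le_minus_one) simp
  moreover have "ln (real (Suc n)) \<ge> 0" by simp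
  ultimately have "norm (Ln (of_nat (Suc n)) :: complex) \<le> real (Suc n)"
    by (subst Ln_of_nat) auto
  then have "norm z ^ n * norm (Ln (of_nat (Suc n)) :: complex) \<le> norm z ^ n * real (Suc n)"
    by (intro mult_left_mono) auto
  then show "norm (z ^ n * Ln (of_nat (Suc n))) \<le> real (Suc n) * norm z ^ n" 
    by (simp add: norm_mult norm_power mult.commute)
qed

definition fpl :: "complex \<Rightarrow> complex \<Rightarrow> complex" where
  "fpl s z = (if z \<in> slit_plane then z / (1 - z) - z^2 / (1 - z) * (rGamma s * Qf s z) else 0)"

lemma disc_slit: "norm (z::complex) < 1 \<Longrightarrow> z \<in> slit_plane"
  using complex_Re_le_cmod[of z] by (auto simp: slit_plane_iff)

lemma slit_ne1: "z \<in> slit_plane \<Longrightarrow> 1 - z \<noteq> 0"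
  by (auto simp: slit_plane_iff)

lemma fpl_disc:
  fixes s z :: complex
  assumes s: "norm s < 1/4" and z: "norm z < 1"
  shows "fpl s z = (\<Sum>n. z ^ Suc n / of_nat (Suc n) powr s)"
proof -
  have zs: "z \<in> slit_plane" using disc_slit[OF z] .
  have z1: "1 - z \<noteq> 0" using slit_ne1[OF zs] .
  define a where "a = (\<lambda>n. z ^ Suc n / of_nat (Suc n) powr s)"
  define d where "d = (\<lambda>n. 1 / of_nat (Suc n) powr s - 1 / of_nat (Suc (Suc n)) powr s :: complex)"
  define R where "R = rGamma s * Qf s z"
  have sw: "(\<lambda>n. z^n * Mf s n) sums Qf s z"
    unfolding Mf_def Qf_def
    by (rule swap[OF wt_cont Dm_int _ zs]) (use wt_bound s z in auto)
  then have "(\<lambda>n. rGamma s * (z^n * Mf s n)) sums R" unfolding R_def by (rule sums_mult)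
  moreover have "rGamma s * (z^n * Mf s n) = z^n * d n" for n 
    using M1[OF s, of n] by (simp add: d_def mult.left_commute)
  ultimately have sd: "(\<lambda>n. z^n * d n) sums R" by simp
  define A where "A = suminf a"
  have sa: "a sums A" using summable_pl[OF s z] by (simp add: a_def A_def summable_sums)
  have a0: "a 0 = z" by (simp add: a_def)
  have s1: "(\<lambda>n. z * a n) sums (z * A)" using sums_mult[OF sa] .
  have s2: "(\<lambda>n. a (Suc n)) sums (A - z)" using sums_Suc_iff[of a "A - z"] sa a0 by simp
  have "(\<lambda>n. z * a n - a (Suc n)) sums (z * A - (A - z))" by (rule sums_diff[OF s1 s2])
  moreover have "z * a n - a (Suc n) = z^2 * (z^n * d n)" for n
    by (simp add: a_def d_def algebra_simps power2_eq_square)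
  ultimately have "(\<lambda>n. z^2 * (z^n * d n)) sums (z * A - (A - z))" by simp
  moreover have "(\<lambda>n. z^2 * (z^n * d n)) sums (z^2 * R)" using sums_mult[OF sd] .
  ultimately have eq: "z^2 * R = z * A - (A - z)" using sums_unique2 by blast
  have "fpl s z = z / (1 - z) - z^2 / (1 - z) * R" using zs by (simp add: fpl_def R_def)
  also have "\<dots> = (z - z^2 * R) / (1 - z)" by (simp add: diff_divide_distrib)
  also have "\<dots> = (A - z * A) / (1 - z)" unfolding eq by (simp add: algebra_simps)
  also have "\<dots> = A" using z1 by (simp add: field_simps)
  finally show ?thesis by (simp add: A_def a_def)
qed

lemma fpl_holo:
  assumes s: "norm s < 1/4"
  shows "fpl s holomorphic_on slit_plane"
proof -
  have "(\<lambda>z. z / (1 - z) - z^2 / (1 - z) * (rGamma s * Qf s z)) holomorphic_on slit_plane"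
    using Qf_holo_z[of s] s slit_ne1 by (intro holomorphic_intros) auto
  then show ?thesis by (rule holomorphic_transform) (simp add: fpl_def)
qed

lemma polylog_eq:
  assumes s: "norm s < 1/4"
  shows "polylog s = fpl s"
  unfolding polylog_def
proof (rule the_equality)
  show "fpl s holomorphic_on slit_plane \<and>
    (\<forall>z. norm z < 1 \<longrightarrow> fpl s z = (\<Sum>n. z ^ Suc n / of_nat (Suc n) powr s)) \<and>
    (\<forall>z. z \<notin> slit_plane \<longrightarrow> fpl s z = 0)"
    using fpl_holo[OF s] fpl_disc[OF s] by (auto simp: fpl_def)
next
  fix g assume g: "g holomorphic_on slit_plane \<and>
    (\<forall>z. norm z < 1 \<longrightarrow> g z = (\<Sum>n. z ^ Suc n / of_nat (Suc n) powr s)) \<and>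
    (\<forall>z. z \<notin> slit_plane \<longrightarrow> g z = 0)"
  show "g = fpl s"
  proof
    fix z
    show "g z = fpl s z"
    proof (cases "z \<in> slit_plane")
      case True
      have sub: "ball 0 1 \<subseteq> slit_plane" using disc_slit by auto
      show ?thesis
        by (rule analytic_continuation_open[of "ball 0 1" slit_plane g "fpl s" z])
           (use g fpl_holo[OF s] fpl_disc[OF s] sub True open_slit connected_slit in auto)
    next
      case False then show ?thesis using g by (simp add: fpl_def)
    qed
  qed
qed

lemma polylog0'_eq:
  assumes z: "z \<in> slit_plane"
  shows "polylog0' z = - (z^2 / (1 - z)) * Qf 0 z"
proof -
  obtain D where dQ: "((\<lambda>s. Qf s z) has_field_derivative D) (at 0)" 
    using Qf_deriv_s[OF z, of 0] by auto
  have rg: "(rGamma has_field_derivative 1) (at 0)" 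
    using has_field_derivative_rGamma_nonpos_int[of 0 UNIV] by simp
  have "((\<lambda>s. rGamma s * Qf s z) has_field_derivative Qf 0 z) (at 0)" 
    using DERIV_mult[OF rg dQ] by simp
  then have d: "((\<lambda>s. z / (1 - z) - z^2 / (1 - z) * (rGamma s * Qf s z)) has_field_derivative 
                  (0 - z^2 / (1 - z) * Qf 0 z)) (at 0)"
    by (intro DERIV_diff DERIV_const DERIV_cmult)
  have d': "((\<lambda>s. polylog s z) has_field_derivative (0 - z^2 / (1 - z) * Qf 0 z)) (at 0)"
    by (rule has_field_derivative_transform_within_open[OF d open_ball[of 0 "1/4"]])
       (auto simp: polylog_eq fpl_def z)
  then show ?thesis unfolding polylog0'_def by (simp add: DERIV_imp_deriv)
qed


definition Gx :: "real \<Rightarrow> real" where 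
  "Gx x = (if x = 0 then 1 else (1 - x + ln x) / ln x)"

lemma Gx_cont: "continuous_on {0..1} Gx"
proof -
  have "continuous (at x within {0..1}) Gx" if x: "x \<in> {0..1}" for x
  proof (cases "x = 0")
    case True
    have "((\<lambda>x::real. (1 - x + ln x) / ln x) \<longlongrightarrow> 1) (at_right 0)" by real_asymp
    moreover have "eventually (\<lambda>x. (1 - x + ln x) / ln x = Gx x) (at_right (0::real))"
      using eventually_at_right_less[of "0::real"] by eventually_elim (auto simp: Gx_def)
    ultimately have "(Gx \<longlongrightarrow> 1) (at_right 0)" by (rule Lim_transform_eventually)
    then show ?thesis using True by (simp add: continuous_within at_within_Icc_at_right Gx_def)
  next
    case False
    show ?thesis
    proof (cases "x = 1")
      case True
      have "((\<lambda>x::real. (1 - x + ln x) / ln x) \<longlongrightarrow> 0) (at_left 1)" by real_asymp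
      moreover have "eventually (\<lambda>x. (1 - x + ln x) / ln x = Gx x) (at_left (1::real))"
        using eventually_at_left_real[of 0 "1::real", OF zero_less_one] by eventually_elim (auto simp: Gx_def)
      ultimately have "(Gx \<longlongrightarrow> 0) (at_left 1)" by (rule Lim_transform_eventually)
      moreover have "Gx 1 = 0" by (simp add: Gx_def)
      ultimately show ?thesis using True by (simp add: continuous_within at_within_Icc_at_left)
    next
      case False
      have x01: "0 < x" "x < 1" using x \<open>x \<noteq> 0\<close> False by auto
      have "ln x \<noteq> 0" using x01 by simp
      then have "continuous (at x within {0..1}) (\<lambda>x. (1 - x + ln x) / ln x)"
        using x01 by (intro continuous_intros) auto
      then show ?thesis
        by (rule continuous_transform_within[where \<delta> = x]) (use x01 in \<open>auto simp: Gx_def dist_real_def\<close>)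
    qed
  qed
  then show ?thesis by (simp add: continuous_on_eq_continuous_within)
qed

lemma expDm: "t > 0 \<Longrightarrow> norm (complex_of_real (exp (-t))) \<le> Dm t"
proof -
  assume t: "t > 0"
  have "1 \<le> t powr (-1/2) + 2 + t powr (1/2)" using powr_ge_zero[of t "-1/2"] powr_ge_zero[of t "1/2"] by linarith
  then have "1 * exp (-t) \<le> (t powr (-1/2) + 2 + t powr (1/2)) * exp (-t)" by (intro mult_right_mono) auto
  then show ?thesis by (simp add: Dm_def)
qed

lemma expDm': "t > 0 \<Longrightarrow> exp (-t) \<le> Dm t"
  using expDm[of t] by simp

lemma GE_int:
  assumes z: "z \<in> slit_plane"
  shows "integral {0..1} (\<lambda>x. of_real (1 - x + ln x) / ((1 - of_real x * z) * of_real (ln x))) = Pf z - Qf 0 z"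
proof -
  obtain c where c: "c > 0" "\<forall>x\<in>{0..1::real}. c \<le> norm (1 - of_real x * z)"
    using slit_lb[OF z] by blast
  have cb: "c \<le> norm (1 - z * of_real (exp (-t)))" if "t \<ge> 0" for t 
    using slit_lb_exp[OF c(2) that] .
  have ne: "1 - z * of_real (exp (-t)) \<noteq> 0" if "t \<ge> 0" for t 
    using cb[OF that] c(1) by auto
  define F where "F = (\<lambda>x. of_real (Gx x) / (1 - of_real x * z))"
  have cF: "continuous_on {0..1} F" unfolding F_def 
    using slit_nonzero[OF z] by (intro continuous_intros continuous_on_of_real Gx_cont) auto
  have e1: "integral {0..1} (\<lambda>x. of_real (1 - x + ln x) / ((1 - of_real x * z) * of_real (ln x))) = integral {0..1} F"
  proof (rule integral_spike[of "{0}"])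
    fix x assume "x \<in> {0..1::real} - {0}"
    then have "x \<noteq> 0" by auto
    then show "F x = of_real (1 - x + ln x) / ((1 - of_real x * z) * of_real (ln x))"
      by (simp add: F_def Gx_def divide_divide_eq_left mult.commute)
  qed auto
  have conv: "((\<lambda>t. of_real (exp (-t)) * F (exp (-t))) has_integral integral {0..1} F) {0<..}" 
    by (rule conv01[OF cF])
  define A where "A = (\<lambda>t. of_real (exp (-t)) / (1 - z * of_real (exp (-t))) :: complex)"
  define B where "B = (\<lambda>t. wt 0 t / (1 - z * of_real (exp (-t))))"
  have pt: "of_real (exp (-t)) * F (exp (-t)) = A t - B t" if t: "t \<in> {0<..}" for t
  proof -
    have tt: "t > 0" using t by simp
    have g: "Gx (exp (-t)) = 1 - (1 - exp (-t)) / t" using tt by (simp add: Gx_def field_simps)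
    have w: "wt 0 t = of_real (exp (-t) * (1 - exp (-t)) / t)"
    proof -
      have "(of_real t :: complex) powr (0 - 1) = of_real t powr (of_int (-1))" by simp
      also have "\<dots> = inverse (of_real t)" using tt by (subst powr_of_int) auto
      finally show ?thesis by (simp add: wt_def field_simps)
    qed
    have r: "exp (-t) * Gx (exp (-t)) = exp (-t) - exp (-t) * (1 - exp (-t)) / t" 
      unfolding g by (simp add: right_diff_distrib)
    have "of_real (exp (-t)) * F (exp (-t)) = of_real (exp (-t) * Gx (exp (-t))) / (1 - z * of_real (exp (-t)))"
      by (simp add: F_def mult.commute[of _ z])
    also have "\<dots> = (of_real (exp (-t)) - of_real (exp (-t) * (1 - exp (-t)) / t)) / (1 - z * of_real (exp (-t)))" 
      by (simp only: r of_real_diff)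
    also have "\<dots> = A t - B t" by (simp only: A_def B_def w diff_divide_distrib)
    finally show ?thesis .
  qed
  have iA: "A integrable_on {0<..}" 
  proof (rule int_bound[OF _ Dm_int_c[of "1/c"]])
    show "continuous_on {0<..} A" unfolding A_def using ne by (auto intro!: continuous_intros)
    fix t :: real assume t: "t > 0"
    have "norm (complex_of_real (exp (-t))) / norm (1 - z * of_real (exp (-t))) \<le> Dm t / c"
      using expDm[OF t] cb[of t] t c(1) Dm_nonneg[of t] by (intro frac_le) auto
    then show "norm (A t) \<le> 1 / c * Dm t" by (simp add: A_def norm_divide)
  qed
  have iB: "B integrable_on {0<..}" 
  proof (rule int_bound[OF _ Dm_int_c[of "1/c"]])
    show "continuous_on {0<..} B" unfolding B_def using ne by (auto intro!: continuous_intros wt_cont)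
    fix t :: real assume t: "t > 0"
    have "norm (wt 0 t) / norm (1 - z * of_real (exp (-t))) \<le> Dm t / c"
      using wt_bound[OF t, of 0] cb[of t] t c(1) Dm_nonneg[of t] by (intro frac_le) auto
    then show "norm (B t) \<le> 1 / c * Dm t" by (simp add: B_def norm_divide)
  qed
  have "integral {0..1} F = integral {0<..} (\<lambda>t. of_real (exp (-t)) * F (exp (-t)))"
    using conv by (simp add: integral_unique)
  also have "\<dots> = integral {0<..} (\<lambda>t. A t - B t)" by (rule integral_cong) (use pt in auto)
  also have "\<dots> = integral {0<..} A - integral {0<..} B" by (rule integral_diff[OF iA iB])
  also have "\<dots> = Pf z - Qf 0 z" by (simp add: A_def B_def Pf_def Qf_def)
  finally show ?thesis using e1 by simp
qed

lemma GE_eq: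
  assumes z: "z \<in> slit_plane"
  shows "gen_euler_gamma z = Pf z - Qf 0 z"
proof (cases "norm z \<le> 1")
  case True
  have sP0: "(\<lambda>n. z^n * integral {0<..} (\<lambda>t. of_real (exp (-t)) * of_real (exp (- (real n * t))))) sums Pf z"
    unfolding Pf_def
    by (rule swap[OF _ Dm_int _ z True]) (auto intro!: continuous_intros simp: expDm')
  have sP: "(\<lambda>n. z^n * (1 / of_nat (Suc n))) sums Pf z"
    using sP0 by (simp only: exp_moment[THEN integral_unique])
  have sQ: "(\<lambda>n. z^n * Mf 0 n) sums Qf 0 z"
    unfolding Mf_def Qf_def
    by (rule swap[OF wt_cont Dm_int _ z True]) (use wt_bound in auto)
  have "(\<lambda>n. z^n * (1 / of_nat (Suc n)) - z^n * Mf 0 n) sums (Pf z - Qf 0 z)"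
    by (rule sums_diff[OF sP sQ])
  moreover have "z^n * (1 / of_nat (Suc n)) - z^n * Mf 0 n = 
        z ^ n * (1 / of_nat (Suc n) - Ln (of_nat (Suc (Suc n)) / of_nat (Suc n)))" for n
    using Ln_of_nat_over_of_nat[of "Suc (Suc n)" "Suc n"] Mf0[of n] by (simp add: right_diff_distrib)
  ultimately have "(\<lambda>n. z ^ n * (1 / of_nat (Suc n) - Ln (of_nat (Suc (Suc n)) / of_nat (Suc n)))) sums (Pf z - Qf 0 z)"
    by simp
  then show ?thesis using True by (simp add: gen_euler_gamma_def sums_unique[symmetric])
next
  case False
  then show ?thesis using GE_int[OF z] by (simp add: gen_euler_gamma_def)
qed

theorem theorem8:
  shows "(\<forall>z\<in>slit_plane.
            z\<^sup>2 * gen_euler_gamma z = (1 - z) * polylog0' z - z * Ln (1 - z))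
       \<and> (\<forall>z::complex. norm z < 1 \<longrightarrow>
            z * gen_euler_gamma z =
              - Ln (1 - z) - (1 - z) * (\<Sum>n. z ^ n * Ln (of_nat (Suc n))))"
proof (intro conjI ballI allI impI)
  fix z assume z: "z \<in> slit_plane"
  have z1: "1 - z \<noteq> 0" using slit_ne1[OF z] .
  have "z\<^sup>2 * gen_euler_gamma z = z * (z * Pf z) - z^2 * Qf 0 z"
    by (simp add: GE_eq[OF z] power2_eq_square algebra_simps)
  also have "\<dots> = - z * Ln (1 - z) - z^2 * Qf 0 z" by (simp add: Pf_eq[OF z])
  also have "\<dots> = (1 - z) * polylog0' z - z * Ln (1 - z)"
    using z1 by (simp add: polylog0'_eq[OF z] field_simps)
  finally show "z\<^sup>2 * gen_euler_gamma z = (1 - z) * polylog0' z - z * Ln (1 - z)" .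
next
  fix z :: complex assume z: "norm z < 1"
  have zs: "z \<in> slit_plane" using disc_slit[OF z] .
  define b where "b = (\<lambda>n. Ln (of_nat (Suc n)) :: complex)"
  define B where "B = (\<Sum>n. z ^ n * b n)"
  have sB: "(\<lambda>n. z ^ n * b n) sums B" 
    using summable_lnser[OF z] by (simp add: B_def b_def summable_sums)
  have sQ: "(\<lambda>n. z^n * Mf 0 n) sums Qf 0 z"
    unfolding Mf_def Qf_def
    by (rule swap[OF wt_cont Dm_int _ zs]) (use wt_bound z in auto)
  have Mb: "Mf 0 n = b (Suc n) - b n" for n 
    by (simp add: Mf0 b_def Ln_of_nat del: of_nat_Suc)
  have s1: "(\<lambda>n. z ^ Suc n * b (Suc n)) sums B"
    using sums_Suc_iff[of "\<lambda>n. z ^ n * b n" B] sB by (simp add: b_def)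
  have s2: "(\<lambda>n. z * (z ^ n * b n)) sums (z * B)" using sums_mult[OF sB] .
  have "(\<lambda>n. z ^ Suc n * b (Suc n) - z * (z ^ n * b n)) sums (B - z * B)" by (rule sums_diff[OF s1 s2])
  moreover have "(\<lambda>n. z * (z^n * Mf 0 n)) sums (z * Qf 0 z)" using sums_mult[OF sQ] .
  moreover have "z * (z^n * Mf 0 n) = z ^ Suc n * b (Suc n) - z * (z ^ n * b n)" for n
    by (simp add: Mb algebra_simps)
  ultimately have zQ: "z * Qf 0 z = B - z * B" using sums_unique2 by fastforce
  have "z * gen_euler_gamma z = z * Pf z - z * Qf 0 z" by (simp add: GE_eq[OF zs] algebra_simps)
  also have "\<dots> = - Ln (1 - z) - (1 - z) * B" by (simp add: Pf_eq[OF zs] zQ algebra_simps)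
  finally show "z * gen_euler_gamma z = - Ln (1 - z) - (1 - z) * (\<Sum>n. z ^ n * Ln (of_nat (Suc n)))"
    by (simp add: B_def b_def)
qed


end
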